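(* If an unbounded ballean $X$ has bounded growth, then $X$ contains a discrete subballean.
   Context: A ballean is a pair $(X,\mathcal E_X)$ where $X$ is a set and $\mathcal E_X$ is a family of subsets of $X\times X$ (entourages) such that: each $E\in\mathcal E_X$ contains the diagonal $\Delta_X$; for any $E,F\in\mathcal E_X$ there is $D\in\mathcal E_X$ with $E\circ F^{-1}\subset D$; and $\bigcup\mathcal E_X=X\times X$. For $E\subset X\times X$, $x\in X$, $A\subset X$: $E[x]=\{y:(x,y)\in E\}$, $E[A]=\bigcup_{a\in A}E[a]$. $B\subset X$ is bounded if $B\subset E[x]$ for some $E\in\mathcal E_X$, $x\in X$; $X$ is unbounded if $X$ itself is not bounded. A subballean on $Y\subset X$ is $(Y,\{(Y\times Y)\cap E:E\in\mathcal E_X\})$. A ballean $Y$ is discrete if $Y$ is unbounded and for every entourage $E$ of $Y$ there is a bounded $B_E\subset Y$ with $E[y]=\{y\}$ for all $y\in Y\setminus B_E$. $X$ has bounded growth if there is $G\subset X\times X$ with $G[B]$ bounded for all bounded $B\subset X$, and for each $E\in\mathcal E_X$ a bounded $B$ with $E[x]\subset G[x]$ for all $x\in X\setminus B$. *)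

theory Defs
  imports Main
begin

text \<open>A ballean is modelled as a carrier set X together with a family EE of
entourages, each a subset of X \<times> X. E[x] is the relational image E `` {x}.\<close>

definition ballean :: "'a set \<Rightarrow> ('a \<times> 'a) set set \<Rightarrow> bool" where
  "ballean X EE \<longleftrightarrow>
     (\<forall>E\<in>EE. E \<subseteq> X \<times> X) \<and>
     (\<forall>E\<in>EE. Id_on X \<subseteq> E) \<and>
     (\<forall>E\<in>EE. \<forall>F\<in>EE. \<exists>D\<in>EE. E O (F\<inverse>) \<subseteq> D) \<and>
     \<Union>EE = X \<times> X"

definition bounded_in :: "'a set \<Rightarrow> ('a \<times> 'a) set set \<Rightarrow> 'a set \<Rightarrow> bool" where
  "bounded_in X EE B \<longleftrightarrow> B \<subseteq> X \<and> (\<exists>E\<in>EE. \<exists>x\<in>X. B \<subseteq> E `` {x})"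

definition unbounded :: "'a set \<Rightarrow> ('a \<times> 'a) set set \<Rightarrow> bool" where
  "unbounded X EE \<longleftrightarrow> \<not> bounded_in X EE X"

definition subballean :: "'a set \<Rightarrow> ('a \<times> 'a) set set \<Rightarrow> 'a set \<Rightarrow> ('a \<times> 'a) set set" where
  "subballean X EE Y = {(Y \<times> Y) \<inter> E | E. E \<in> EE}"

definition discrete_ballean :: "'a set \<Rightarrow> ('a \<times> 'a) set set \<Rightarrow> bool" where
  "discrete_ballean Y EE \<longleftrightarrow> unbounded Y EE \<and>
     (\<forall>E\<in>EE. \<exists>B. bounded_in Y EE B \<and> (\<forall>y\<in>Y - B. E `` {y} = {y}))"

definition bounded_growth :: "'a set \<Rightarrow> ('a \<times> 'a) set set \<Rightarrow> bool" where
  "bounded_growth X EE \<longleftrightarrow> (\<exists>G. G \<subseteq> X \<times> X \<and>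
     (\<forall>B. bounded_in X EE B \<longrightarrow> bounded_in X EE (G `` B)) \<and>
     (\<forall>E\<in>EE. \<exists>B. bounded_in X EE B \<and> (\<forall>x\<in>X - B. E `` {x} \<subseteq> G `` {x})))"

end

theory Submission
  imports Defs
begin

lemma b_inv:
  assumes "ballean X EE" "E \<in> EE" shows "\<exists>D\<in>EE. E\<inverse> \<subseteq> D"
proof -
  from assms obtain D where D: "D \<in> EE" "E O E\<inverse> \<subseteq> D" unfolding ballean_def by meson
  have "E\<inverse> \<subseteq> E O E\<inverse>"
  proof
    fix p assume p: "p \<in> E\<inverse>"
    then obtain a b where ab: "p = (a,b)" "(b,a) \<in> E" by auto
    then have "a \<in> X" using assms unfolding ballean_def by blast
    then have "(a,a) \<in> E" using assms unfolding ballean_def Id_on_def by blast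
    with ab show "p \<in> E O E\<inverse>" by blast
  qed
  with D show ?thesis by blast
qed

lemma b_comp:
  assumes "ballean X EE" "E \<in> EE" "F \<in> EE" shows "\<exists>D\<in>EE. E O F \<subseteq> D"
proof -
  obtain D1 where D1: "D1 \<in> EE" "F\<inverse> \<subseteq> D1" using b_inv[OF assms(1,3)] by blast
  obtain D where D: "D \<in> EE" "E O D1\<inverse> \<subseteq> D" using assms D1(1) unfolding ballean_def by meson
  have "E O F \<subseteq> E O D1\<inverse>" using D1(2) by blast
  with D show ?thesis by blast
qed

lemma b_un:
  assumes "ballean X EE" "E \<in> EE" "F \<in> EE" shows "\<exists>D\<in>EE. E \<union> F \<subseteq> D"
proof -
  obtain D where D: "D \<in> EE" "E O F \<subseteq> D" using b_comp[OF assms] by blast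
  have EX: "E \<subseteq> X \<times> X" "F \<subseteq> X \<times> X" "Id_on X \<subseteq> E" "Id_on X \<subseteq> F"
    using assms unfolding ballean_def by auto
  have "E \<union> F \<subseteq> E O F"
  proof
    fix p assume "p \<in> E \<union> F"
    then obtain a b where ab: "p = (a,b)" "(a,b) \<in> E \<or> (a,b) \<in> F" by (cases p) auto
    then have "a \<in> X" "b \<in> X" using EX by auto
    then have "(a,a) \<in> E" "(b,b) \<in> F" using EX unfolding Id_on_def by auto
    with ab show "p \<in> E O F" by blast
  qed
  with D show ?thesis by blast
qed

lemma bd_image:
  assumes "ballean X EE" "bounded_in X EE C" "E \<in> EE" shows "bounded_in X EE (E `` C)"
proof -
  obtain F x where F: "F \<in> EE" "x \<in> X" "C \<subseteq> F `` {x}" using assms(2) unfolding bounded_in_def by blast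
  obtain D where D: "D \<in> EE" "F O E \<subseteq> D" using b_comp[OF assms(1) F(1) assms(3)] by blast
  have "E `` C \<subseteq> D `` {x}" using F(3) D(2) by blast
  moreover have "E `` C \<subseteq> X" using assms unfolding ballean_def by blast
  ultimately show ?thesis using D F unfolding bounded_in_def by blast
qed

lemma bd_un:
  assumes "ballean X EE" "bounded_in X EE C" "bounded_in X EE C'" shows "bounded_in X EE (C \<union> C')"
proof -
  obtain F x where F: "F \<in> EE" "x \<in> X" "C \<subseteq> F `` {x}" using assms(2) unfolding bounded_in_def by blast
  obtain H z where H: "H \<in> EE" "z \<in> X" "C' \<subseteq> H `` {z}" using assms(3) unfolding bounded_in_def by blast
  have "(x,z) \<in> \<Union>EE" using assms(1) F H unfolding ballean_def by auto
  then obtain E1 where E1: "E1 \<in> EE" "(x,z) \<in> E1" by blast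
  obtain K where K: "K \<in> EE" "E1 O H \<subseteq> K" using b_comp[OF assms(1) E1(1) H(1)] by blast
  obtain M where M: "M \<in> EE" "F \<union> K \<subseteq> M" using b_un[OF assms(1) F(1) K(1)] by blast
  have "C \<union> C' \<subseteq> M `` {x}" using F(3) H(3) E1(2) K(2) M(2) by blast
  moreover have "C \<union> C' \<subseteq> X" using assms unfolding bounded_in_def by blast
  ultimately show ?thesis using M F unfolding bounded_in_def by blast
qed

lemma bd_sub:
  assumes "bounded_in X EE C" "B \<subseteq> C" shows "bounded_in X EE B"
  using assms unfolding bounded_in_def by blast

lemma bd_restrict:
  assumes "ballean X EE" "bounded_in X EE C" "Y \<subseteq> X" "y \<in> Y"
  shows "bounded_in Y (subballean X EE Y) (Y \<inter> C)"
proof -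
  obtain F x where F: "F \<in> EE" "x \<in> X" "C \<subseteq> F `` {x}" using assms(2) unfolding bounded_in_def by blast
  have "(y,x) \<in> \<Union>EE" using assms F unfolding ballean_def by auto
  then obtain E1 where E1: "E1 \<in> EE" "(y,x) \<in> E1" by blast
  obtain D where D: "D \<in> EE" "E1 O F \<subseteq> D" using b_comp[OF assms(1) E1(1) F(1)] by blast
  have "Y \<inter> C \<subseteq> ((Y \<times> Y) \<inter> D) `` {y}" using F(3) E1(2) D(2) assms(4) by blast
  moreover have "(Y \<times> Y) \<inter> D \<in> subballean X EE Y" using D(1) unfolding subballean_def by blast
  ultimately show ?thesis using assms(4) unfolding bounded_in_def by blast
qed

theorem proposition3p6:
  fixes X :: "'a set" and EE :: "('a \<times> 'a) set set"
  assumes "ballean X EE" and "unbounded X EE" and "bounded_growth X EE"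
  shows "\<exists>Y\<subseteq>X. discrete_ballean Y (subballean X EE Y)"
proof -
  note bal = assms(1)
  obtain G where G: "G \<subseteq> X \<times> X" "\<And>B. bounded_in X EE B \<Longrightarrow> bounded_in X EE (G `` B)"
    "\<And>E. E\<in>EE \<Longrightarrow> \<exists>B. bounded_in X EE B \<and> (\<forall>x\<in>X - B. E `` {x} \<subseteq> G `` {x})"
    using assms(3) unfolding bounded_growth_def by blast
  define S where "S = {Y. Y \<subseteq> X \<and> (\<forall>a\<in>Y. \<forall>b\<in>Y. a \<noteq> b \<longrightarrow> (a,b) \<notin> G \<or> (b,a) \<notin> G)}"
  have "\<forall>C\<in>chains S. \<Union>C \<in> S"
  proof
    fix C assume C: "C \<in> chains S"
    show "\<Union>C \<in> S" unfolding S_def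
    proof (intro CollectI conjI ballI impI)
      show "\<Union>C \<subseteq> X" using C unfolding chains_def S_def by blast
    next
      fix a b assume a: "a \<in> \<Union>C" and b: "b \<in> \<Union>C" and ne: "a \<noteq> b"
      then obtain A B where AB: "A \<in> C" "B \<in> C" "a \<in> A" "b \<in> B" by blast
      have "A \<subseteq> B \<or> B \<subseteq> A" using C AB unfolding chains_def chain_subset_def by blast
      then obtain W where W: "W \<in> C" "a \<in> W" "b \<in> W" using AB by blast
      then show "(a,b) \<notin> G \<or> (b,a) \<notin> G" using C ne unfolding chains_def S_def by blast
    qed
  qed
  from Zorn_Lemma[OF this] obtain Y where Y: "Y \<in> S" and maxY: "\<And>Z. Z \<in> S \<Longrightarrow> Y \<subseteq> Z \<Longrightarrow> Z = Y"
    by blast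
  have YX: "Y \<subseteq> X" and sp: "\<And>a b. a \<in> Y \<Longrightarrow> b \<in> Y \<Longrightarrow> a \<noteq> b \<Longrightarrow> (a,b) \<notin> G \<or> (b,a) \<notin> G"
    using Y unfolding S_def by auto
  have cover: "X \<subseteq> Y \<union> G `` Y"
  proof
    fix x assume x: "x \<in> X"
    show "x \<in> Y \<union> G `` Y"
    proof (rule ccontr)
      assume nx: "x \<notin> Y \<union> G `` Y"
      have "insert x Y \<in> S" unfolding S_def
      proof (intro CollectI conjI ballI impI)
        show "insert x Y \<subseteq> X" using x YX by blast
      next
        fix a b assume a: "a \<in> insert x Y" and b: "b \<in> insert x Y" and ne: "a \<noteq> b"
        show "(a,b) \<notin> G \<or> (b,a) \<notin> G"
        proof (cases "a = x")
          case True
          then have "b \<in> Y" using b ne by blast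
          then show ?thesis using nx True by blast
        next
          case False
          then have aY: "a \<in> Y" using a by blast
          show ?thesis
          proof (cases "b = x")
            case True then show ?thesis using nx aY by blast
          next
            case False then show ?thesis using b aY sp ne by blast
          qed
        qed
      qed
      with maxY have "insert x Y = Y" by blast
      with nx show False by blast
    qed
  qed
  have unb: "unbounded Y (subballean X EE Y)"
    unfolding unbounded_def
  proof
    assume "bounded_in Y (subballean X EE Y) Y"
    then obtain E' y where E': "E' \<in> subballean X EE Y" "y \<in> Y" "Y \<subseteq> E' `` {y}"
      unfolding bounded_in_def by blast
    then obtain F where F: "F \<in> EE" "E' = (Y \<times> Y) \<inter> F" unfolding subballean_def by blast
    have "bounded_in X EE Y" using E' F YX unfolding bounded_in_def by blast
    then have "bounded_in X EE (Y \<union> G `` Y)" using bd_un[OF bal] G(2) by blast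
    then have "bounded_in X EE X" using bd_sub cover by blast
    then show False using assms(2) unfolding unbounded_def by blast
  qed
  have disc: "\<forall>E'\<in>subballean X EE Y. \<exists>B. bounded_in Y (subballean X EE Y) B \<and>
      (\<forall>y\<in>Y - B. E' `` {y} = {y})"
  proof
    fix E' assume "E' \<in> subballean X EE Y"
    then obtain E where E: "E \<in> EE" "E' = (Y \<times> Y) \<inter> E" unfolding subballean_def by blast
    obtain D1 where D1: "D1 \<in> EE" "E\<inverse> \<subseteq> D1" using b_inv[OF bal E(1)] by blast
    obtain D where D: "D \<in> EE" "E \<union> D1 \<subseteq> D" using b_un[OF bal E(1) D1(1)] by blast
    obtain BD where BD: "bounded_in X EE BD" "\<And>x. x \<in> X - BD \<Longrightarrow> D `` {x} \<subseteq> G `` {x}"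
      using G(3)[OF D(1)] by blast
    have Cb: "bounded_in X EE (D `` BD)" using bd_image[OF bal BD(1) D(1)] .
    have "X \<noteq> {}" using BD(1) unfolding bounded_in_def by blast
    then obtain y0 where y0: "y0 \<in> Y" using cover by blast
    have Bb: "bounded_in Y (subballean X EE Y) (Y \<inter> D `` BD)"
      using bd_restrict[OF bal Cb YX y0] .
    have EX: "E \<subseteq> X \<times> X" "Id_on X \<subseteq> E" "Id_on X \<subseteq> D" "BD \<subseteq> X"
      using bal E(1) D(1) BD(1) unfolding ballean_def bounded_in_def by auto
    have "\<forall>y\<in>Y - (Y \<inter> D `` BD). E' `` {y} = {y}"
    proof
      fix y assume y: "y \<in> Y - (Y \<inter> D `` BD)"
      then have yX: "y \<in> X" using YX by blast
      have yBD: "y \<notin> BD" using y EX(3,4) unfolding Id_on_def by blast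
      show "E' `` {y} = {y}"
      proof
        show "{y} \<subseteq> E' `` {y}" using E(2) y yX EX(2) unfolding Id_on_def by blast
      next
        show "E' `` {y} \<subseteq> {y}"
        proof
          fix z assume "z \<in> E' `` {y}"
          then have z: "z \<in> Y" "(y,z) \<in> E" using E(2) by auto
          show "z \<in> {y}"
          proof (rule ccontr)
            assume ne: "z \<notin> {y}"
            have zX: "z \<in> X" using z YX by blast
            have "(z,y) \<in> D" using z(2) D1(2) D(2) by blast
            then have zBD: "z \<notin> BD" using y by blast
            have "(y,z) \<in> G" using BD(2)[of y] yX yBD z(2) D(2) by blast
            moreover have "(z,y) \<in> G" using BD(2)[of z] zX zBD \<open>(z,y) \<in> D\<close> by blast
            ultimately show False using sp[of y z] y z ne by blast
          qed
        qed
      qed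
    qed
    then show "\<exists>B. bounded_in Y (subballean X EE Y) B \<and> (\<forall>y\<in>Y - B. E' `` {y} = {y})"
      using Bb by blast
  qed
  show ?thesis using YX unb disc unfolding discrete_ballean_def by blast
qed

end
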